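(* Let $p\ge1$ be an integer and consider the hybrid system (2.2) associated with a consistent Runge–Kutta scheme of order $p$ for $\dot z=f(z)$ with continuous step bound $\varphi:\mathbb{R}^n\to(0,+\infty)$. Suppose: (i) there exist a Lyapunov function $V\in C^1(\mathbb{R}^n;\mathbb{R}^+)$ for $\dot z=f(z)$ and a continuous positive definite $\tilde W:\mathbb{R}^n\to\mathbb{R}^+$ such that $V(z(h,x))\le V(x)-h\tilde W(x)$ for all $x\in\mathbb{R}^n$ and $h\in[0,\varphi(x)]$; (ii) there exists $b\ge0$ with $|z(h,x)|\le\exp(b)|x|$ and $|x+hF(h,x)|\le\exp(b)|x|$ for all $x$ and $h\in[0,\varphi(x)]$; (iii) there is a continuous positive definite $C:\mathbb{R}^n\to\mathbb{R}^+$ with $|z(h,x)-x-hF(h,x)|\le C(x)h^{p+1}$ for all $x$ and $h\in[0,\varphi(x)]$, and a constant $\lambda\in(0,1)$ such that $$\varphi(x)\le\Big(\frac{(1-\lambda)\tilde W(x)}{l_V^b(x)C(x)}\Big)^{1/p}\quad\forall x\ne0,$$ where $l_V^b(x):=\max\{|\nabla V(z)|:|z|\le\exp(b)|x|\}$. Then $0\in\mathbb{R}^n$ is URGAS for (2.2). If moreover there exist $\sigma,K>0$ with $\tilde W(x)\ge2\sigma V(x)$ and $V(x)\ge K|x|^2$ for all $x$, then $0$ is robustly K-exponentially stable for (2.2).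
   Context: Standing framework: $f$ locally Lipschitz with $f(0)=0$; $z(t,x)$ is the solution of $\dot z=f(z)$ with $z(0)=x$. A consistent $s$-stage Runge–Kutta scheme has coefficients $a_{ij},b_i$ with $\sum_ib_i=1$ and is represented by $F(h,x):=\sum_{i=1}^sb_if(Y_i)$ where $Y_i=x+h\sum_{j=1}^sa_{ij}f(Y_j)$; the continuous step bound $\varphi$ is assumed small enough that these equations have a unique solution for all $h\in[0,\varphi(x)]$ and that $|F(h,x)|\le|x|M(|x|)$ for some continuous nondecreasing $M$. The hybrid system (2.2): for each locally bounded $u:\mathbb{R}^+\to\mathbb{R}^+$ and $x_0$, $\tau_0=0$, $x(0)=x_0$, $h_i=\varphi(x(\tau_i))\exp(-u(\tau_i))$, $\tau_{i+1}=\tau_i+h_i$, $x(t)=x(\tau_i)+(t-\tau_i)F(h_i,x(\tau_i))$ on $[\tau_i,\tau_{i+1}]$; solution $x(t,x_0;u)$. URGAS: (a) for every $\varepsilon>0$ there is $\delta>0$ with $|x_0|<\delta\Rightarrow|x(t,x_0;u)|<\varepsilon$ for all $t\ge0$, all $u$; (b) for every $R$, $\sup\{|x(t,x_0;u)|:t\ge0,|x_0|\le R,u\}<\infty$; (c) for all $\varepsilon,R$ there is $T$ with $|x(t,x_0;u)|\le\varepsilon$ for $t\ge T$, $|x_0|\le R$, all locally bounded $u\ge0$. Robustly K-exponentially stable: there exist $a\in K_\infty$, $\sigma>0$ with $|x(t,x_0;u)|\le e^{-\sigma t}a(|x_0|)$ for all $t,x_0,u$. A Lyapunov function for $\dot z=f(z)$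 is a positive definite, radially unbounded $C^1$ function $V$ with $\nabla V(x)f(x)<0$ for $x\ne0$. *)

theory Defs
  imports "HOL-Analysis.Analysis"
begin

definition loc_lipschitz :: "('a::real_normed_vector \<Rightarrow> 'b::real_normed_vector) \<Rightarrow> bool" where
  "loc_lipschitz f \<longleftrightarrow> (\<forall>x. \<exists>r>0. \<exists>L. \<forall>y\<in>ball x r. \<forall>y'\<in>ball x r.
      norm (f y - f y') \<le> L * norm (y - y'))"

definition is_flow :: "('a::real_normed_vector \<Rightarrow> 'a) \<Rightarrow> (real \<Rightarrow> 'a \<Rightarrow> 'a) \<Rightarrow> bool" where
  "is_flow f z \<longleftrightarrow> (\<forall>x. z 0 x = x \<and>
     (\<forall>t\<ge>0. ((\<lambda>s. z s x) has_vector_derivative f (z t x)) (at t within {0..})))"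

definition pos_def :: "('a::real_normed_vector \<Rightarrow> real) \<Rightarrow> bool" where
  "pos_def W \<longleftrightarrow> W 0 = 0 \<and> (\<forall>x. x \<noteq> 0 \<longrightarrow> W x > 0)"

definition is_lyapunov :: "('a::euclidean_space \<Rightarrow> 'a) \<Rightarrow> ('a \<Rightarrow> real) \<Rightarrow> ('a \<Rightarrow> 'a) \<Rightarrow> bool" where
  "is_lyapunov f V gV \<longleftrightarrow>
     (\<forall>x. (V has_derivative (\<lambda>v. gV x \<bullet> v)) (at x)) \<and> continuous_on UNIV gV \<and>
     pos_def V \<and> filterlim V at_top at_infinity \<and>
     (\<forall>x. x \<noteq> 0 \<longrightarrow> gV x \<bullet> f x < 0)"

definition lVb :: "('a::euclidean_space \<Rightarrow> 'a) \<Rightarrow> real \<Rightarrow> 'a \<Rightarrow> real" where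
  "lVb gV b x = Sup ((\<lambda>z. norm (gV z)) ` cball 0 (exp b * norm x))"

definition rk_stages :: "nat \<Rightarrow> (nat \<Rightarrow> nat \<Rightarrow> real) \<Rightarrow> ('a::real_normed_vector \<Rightarrow> 'a)
    \<Rightarrow> real \<Rightarrow> 'a \<Rightarrow> (nat \<Rightarrow> 'a) \<Rightarrow> bool" where
  "rk_stages s a f h x Y \<longleftrightarrow> (\<forall>i<s. Y i = x + h *\<^sub>R (\<Sum>j<s. a i j *\<^sub>R f (Y j)))"

definition rk_F :: "nat \<Rightarrow> (nat \<Rightarrow> nat \<Rightarrow> real) \<Rightarrow> (nat \<Rightarrow> real) \<Rightarrow> ('a::real_normed_vector \<Rightarrow> 'a)
    \<Rightarrow> real \<Rightarrow> 'a \<Rightarrow> 'a" where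
  "rk_F s a b f h x = (let Y = (SOME Y. rk_stages s a f h x Y) in (\<Sum>i<s. b i *\<^sub>R f (Y i)))"

fun hyb_seq :: "(real \<Rightarrow> 'a \<Rightarrow> 'a::real_normed_vector) \<Rightarrow> ('a \<Rightarrow> real) \<Rightarrow> (real \<Rightarrow> real)
    \<Rightarrow> 'a \<Rightarrow> nat \<Rightarrow> real \<times> 'a" where
  "hyb_seq F phi u x0 0 = (0, x0)"
| "hyb_seq F phi u x0 (Suc i) =
     (let (\<tau>, x) = hyb_seq F phi u x0 i; h = phi x * exp (- u \<tau>) in (\<tau> + h, x + h *\<^sub>R F h x))"

definition hyb_traj :: "(real \<Rightarrow> 'a \<Rightarrow> 'a::real_normed_vector) \<Rightarrow> ('a \<Rightarrow> real) \<Rightarrow> (real \<Rightarrow> real)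
    \<Rightarrow> 'a \<Rightarrow> real \<Rightarrow> 'a" where
  "hyb_traj F phi u x0 t =
     (let i = (LEAST i. t < fst (hyb_seq F phi u x0 (Suc i)));
          (\<tau>, x) = hyb_seq F phi u x0 i; h = phi x * exp (- u \<tau>)
      in x + (t - \<tau>) *\<^sub>R F h x)"

definition admissible_input :: "(real \<Rightarrow> real) \<Rightarrow> bool" where
  "admissible_input u \<longleftrightarrow> (\<forall>t\<ge>0. u t \<ge> 0) \<and> (\<forall>T\<ge>0. bounded (u ` {0..T}))"

definition URGAS :: "(real \<Rightarrow> 'a \<Rightarrow> 'a::real_normed_vector) \<Rightarrow> ('a \<Rightarrow> real) \<Rightarrow> bool" where
  "URGAS F phi \<longleftrightarrow>
     (\<forall>\<epsilon>>0. \<exists>\<delta>>0. \<forall>x0 u t. norm x0 < \<delta> \<and> admissible_input u \<and> t \<ge> 0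
         \<longrightarrow> norm (hyb_traj F phi u x0 t) < \<epsilon>) \<and>
     (\<forall>R. \<exists>B. \<forall>x0 u t. norm x0 \<le> R \<and> admissible_input u \<and> t \<ge> 0
         \<longrightarrow> norm (hyb_traj F phi u x0 t) \<le> B) \<and>
     (\<forall>\<epsilon>>0. \<forall>R. \<exists>T. \<forall>x0 u t. norm x0 \<le> R \<and> admissible_input u \<and> t \<ge> T \<and> t \<ge> 0
         \<longrightarrow> norm (hyb_traj F phi u x0 t) \<le> \<epsilon>)"

definition class_K_inf :: "(real \<Rightarrow> real) \<Rightarrow> bool" where
  "class_K_inf a \<longleftrightarrow> continuous_on {0..} a \<and> strict_mono_on {0..} a \<and> a 0 = 0 \<and>
     filterlim a at_top at_top"

definition robust_K_exp_stable :: "(real \<Rightarrow> 'a \<Rightarrow> 'a::real_normed_vector) \<Rightarrow> ('a \<Rightarrow> real) \<Rightarrow> bool" where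
  "robust_K_exp_stable F phi \<longleftrightarrow>
     (\<exists>a \<sigma>. class_K_inf a \<and> \<sigma> > 0 \<and>
        (\<forall>x0 u t. admissible_input u \<and> t \<ge> 0 \<longrightarrow>
           norm (hyb_traj F phi u x0 t) \<le> exp (- \<sigma> * t) * a (norm x0)))"

end

theory Submission
  imports Defs
begin


lemma sublevel_bdd:
  fixes V :: "'a::real_normed_vector \<Rightarrow> real"
  assumes "filterlim V at_top at_infinity"
  shows "\<exists>R. \<forall>x. V x \<le> c \<longrightarrow> norm x < R"
proof -
  have "eventually (\<lambda>x. c + 1 \<le> V x) at_infinity"
    using assms by (simp add: filterlim_at_top)
  then obtain R where R: "\<And>x. R \<le> norm x \<Longrightarrow> c + 1 \<le> V x"
    by (auto simp: eventually_at_infinity)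
  show ?thesis
    by (rule exI[of _ R]) (smt (verit) R)
qed

lemma pd_min:
  fixes g :: "'a::euclidean_space \<Rightarrow> real"
  assumes gc: "continuous_on UNIV g" and gp: "pos_def g" and r: "0 < r"
  shows "\<exists>w>0. \<forall>x. r \<le> norm x \<and> norm x \<le> R \<longrightarrow> w \<le> g x"
proof (cases "cball (0::'a) R - ball 0 r = {}")
  case True
  then show ?thesis by (intro exI[of _ 1]) (auto simp: dist_norm)
next
  case False
  have "compact (cball (0::'a) R - ball 0 r)" by (simp add: compact_diff)
  moreover have "continuous_on (cball (0::'a) R - ball 0 r) g"
    using gc continuous_on_subset by blast
  ultimately obtain x1 where x1: "x1 \<in> cball 0 R - ball 0 r"
    and m: "\<forall>y\<in>cball 0 R - ball 0 r. g x1 \<le> g y"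
    using continuous_attains_inf[OF _ False] by blast
  have "x1 \<noteq> 0" using x1 r by auto
  then have "g x1 > 0" using gp by (auto simp: pos_def_def)
  then show ?thesis using m by (intro exI[of _ "g x1"]) (auto simp: dist_norm)
qed

lemma ball_max:
  fixes g :: "'a::euclidean_space \<Rightarrow> real"
  assumes gc: "continuous_on UNIV g"
  shows "\<exists>B. \<forall>x. norm x \<le> R \<longrightarrow> g x \<le> B"
proof (cases "R < 0")
  case True then show ?thesis by (metis norm_ge_zero order.trans not_le)
next
  case False
  then have ne: "cball (0::'a) R \<noteq> {}" by auto
  have "continuous_on (cball (0::'a) R) g" using gc continuous_on_subset by blast
  then obtain x1 where "\<forall>y\<in>cball 0 R. g y \<le> g x1"
    using continuous_attains_sup[OF compact_cball ne] by blast
  then show ?thesis by (intro exI[of _ "g x1"]) (auto simp: dist_norm)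
qed

lemma small_V:
  fixes V :: "'a::euclidean_space \<Rightarrow> real"
  assumes Vc: "continuous_on UNIV V" and Vp: "pos_def V" and Vu: "filterlim V at_top at_infinity"
    and e: "0 < e"
  shows "\<exists>c>0. \<forall>x. V x < c \<longrightarrow> norm x < e"
proof -
  obtain R where R: "\<And>x. V x \<le> 1 \<Longrightarrow> norm x < R" using sublevel_bdd[OF Vu] by blast
  obtain w where w: "w > 0" "\<And>x. e \<le> norm x \<Longrightarrow> norm x \<le> R \<Longrightarrow> w \<le> V x"
    using pd_min[OF Vc Vp e, of R] by blast
  show ?thesis
  proof (intro exI[of _ "min 1 w"] conjI allI impI)
    fix x assume "V x < min 1 w"
    then show "norm x < e" using R[of x] w(2)[of x] by force
  qed (use w in auto)
qed

lemma V_small0: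
  fixes V :: "'a::euclidean_space \<Rightarrow> real"
  assumes Vc: "continuous_on UNIV V" and Vp: "pos_def V" and c: "0 < c"
  shows "\<exists>d>0. \<forall>x. norm x < d \<longrightarrow> V x < c"
proof -
  have "isCont V 0" using Vc by (simp add: continuous_on_eq_continuous_at)
  then obtain d where "d > 0" "\<And>x. dist x 0 < d \<Longrightarrow> dist (V x) (V 0) < c"
    using c unfolding continuous_at_eps_delta by blast
  then show ?thesis using Vp by (intro exI[of _ d]) (force simp: pos_def_def dist_norm)
qed



lemma near_pt:
  fixes y :: "'a::real_normed_vector"
  assumes "0 \<le> r0" "norm y \<le> r" "r - r0 < d" "0 < d"
  shows "\<exists>y'. norm y' \<le> r0 \<and> norm y' \<le> norm y \<and> dist y y' < d"
proof (cases "norm y \<le> r0")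
  case True then show ?thesis using assms by (intro exI[of _ y]) auto
next
  case False
  then have ny: "norm y > 0" using assms by linarith
  define y' where "y' = (r0 / norm y) *\<^sub>R y"
  have n1: "norm y' = r0" using ny assms by (simp add: y'_def)
  have "y - y' = (1 - r0 / norm y) *\<^sub>R y" by (simp add: y'_def algebra_simps)
  then have "dist y y' = \<bar>1 - r0 / norm y\<bar> * norm y" by (simp add: dist_norm)
  also have "\<dots> = norm y - r0" using ny False by (simp add: field_simps abs_if)
  finally show ?thesis using n1 False assms by (intro exI[of _ y']) auto
qed

lemma sup_ball:
  fixes g :: "'a::euclidean_space \<Rightarrow> real"
  assumes gc: "continuous_on UNIV g"
  defines "m \<equiv> \<lambda>r. Sup (g ` cball 0 r)"
  shows "continuous_on {0..} m" "\<And>r r'. 0 \<le> r \<Longrightarrow> r \<le> r' \<Longrightarrow> m r \<le> m r'"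
    "\<And>x. g x \<le> m (norm x)" "m 0 = g 0"
proof -
  have bdd: "bdd_above (g ` cball 0 r)" for r
  proof -
    have "compact (g ` cball 0 r)"
      by (intro compact_continuous_image continuous_on_subset[OF gc]) auto
    then show ?thesis by (simp add: bounded_imp_bdd_above compact_imp_bounded)
  qed
  have up: "g y \<le> m r" if "norm y \<le> r" for y r
    unfolding m_def using bdd that by (intro cSup_upper) auto
  show "\<And>x. g x \<le> m (norm x)" using up by simp
  show "m 0 = g 0" by (simp add: m_def)
  show "\<And>r r'. 0 \<le> r \<Longrightarrow> r \<le> r' \<Longrightarrow> m r \<le> m r'"
    unfolding m_def by (rule cSup_subset_mono) (auto intro: bdd)
  show "continuous_on {0..} m"
    unfolding continuous_on_iff
  proof (intro ballI allI impI)
    fix r0 :: real and e :: real assume r0: "r0 \<in> {0..}" and e: "0 < e"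
    have "uniformly_continuous_on (cball (0::'a) (r0 + 1)) g"
      by (intro compact_uniformly_continuous continuous_on_subset[OF gc]) auto
    then obtain dl where dl: "dl > 0" "\<And>x x'. x \<in> cball 0 (r0+1) \<Longrightarrow> x' \<in> cball 0 (r0+1) \<Longrightarrow>
        dist x' x < dl \<Longrightarrow> dist (g x') (g x) < e / 2"
      unfolding uniformly_continuous_on_def using e by (metis half_gt_zero)
    define d where "d = min 1 dl"
    have one: "m ra \<le> m rb + e / 2" if ra: "0 \<le> ra" "ra \<le> r0 + 1" and rb: "0 \<le> rb" "rb \<le> r0 + 1"
      and dd: "ra - rb < d" for ra rb
      unfolding m_def
    proof (rule cSUP_least)
      show "cball (0::'a) ra \<noteq> {}" using ra by auto
      fix y :: 'a assume "y \<in> cball 0 ra"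
      then have ny: "norm y \<le> ra" by simp
      obtain y' where y': "norm y' \<le> rb" "norm y' \<le> norm y" "dist y y' < d"
        using near_pt[OF rb(1) ny dd] dl(1) by (auto simp: d_def)
      have "dist (g y) (g y') < e / 2"
        using dl(2)[of y' y] y' ny ra by (auto simp: d_def)
      moreover have "g y' \<le> Sup (g ` cball 0 rb)" using up[OF y'(1)] by (simp add: m_def)
      ultimately show "g y \<le> Sup (g ` cball 0 rb) + e / 2" unfolding dist_real_def by linarith
    qed
    show "\<exists>d>0. \<forall>x'\<in>{0..}. dist x' r0 < d \<longrightarrow> dist (m x') (m r0) < e"
    proof (intro exI[of _ d] conjI ballI impI)
      show "d > 0" using dl by (simp add: d_def)
      fix r assume r: "r \<in> {0..}" and "dist r r0 < d"
      then have rr: "\<bar>r - r0\<bar> < d" by (simp add: dist_real_def)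
      then have "r \<le> r0 + 1" by (simp add: d_def abs_less_iff)
      then have "m r \<le> m r0 + e / 2" "m r0 \<le> m r + e / 2"
        using one[of r r0] one[of r0 r] r r0 rr by auto
      then show "dist (m r) (m r0) < e" using e by (simp add: dist_real_def)
    qed
  qed
qed



lemma key_step:
  fixes f :: "'a::euclidean_space \<Rightarrow> 'a" and F :: "real \<Rightarrow> 'a \<Rightarrow> 'a" and z :: "real \<Rightarrow> 'a \<Rightarrow> 'a"
  assumes lyap: "is_lyapunov f V gV"
    and W_pd: "pos_def W" and C_pd: "pos_def C"
    and F0: "x = 0 \<Longrightarrow> norm (F h 0) \<le> 0"
    and hyp_i: "V (z h x) \<le> V x - h * W x"
    and hyp_ii: "norm (z h x) \<le> exp b * norm x" "norm (x + h *\<^sub>R F h x) \<le> exp b * norm x"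
    and hyp_iii: "norm (z h x - x - h *\<^sub>R F h x) \<le> C x * h ^ (p + 1)"
    and lam: "0 < lam" "lam < 1" and p: "p \<ge> 1" and b: "b \<ge> 0"
    and phi_le: "x \<noteq> 0 \<Longrightarrow> ph \<le> ((1 - lam) * W x / (lVb gV b x * C x)) powr (1 / real p)"
    and h: "0 \<le> h" "h \<le> ph"
  shows "V (x + h *\<^sub>R F h x) \<le> V x - lam * h * W x"
proof (cases "x = 0")
  case True
  then show ?thesis using F0[OF True] W_pd lyap by (simp add: pos_def_def is_lyapunov_def)
next
  case False
  have Vd: "\<And>y. (V has_derivative (\<lambda>v. gV y \<bullet> v)) (at y)" and gc: "continuous_on UNIV gV"
    and gf: "gV x \<bullet> f x < 0"
    using lyap False by (auto simp: is_lyapunov_def)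
  define S where "S = cball (0::'a) (exp b * norm x)"
  define L where "L = lVb gV b x"
  have cmp: "compact ((\<lambda>z. norm (gV z)) ` S)"
    unfolding S_def
    by (intro compact_continuous_image continuous_on_norm continuous_on_subset[OF gc]) auto
  have bdd: "bdd_above ((\<lambda>z. norm (gV z)) ` S)"
    using cmp by (simp add: bounded_imp_bdd_above compact_imp_bounded)
  have gL: "norm (gV y) \<le> L" if "y \<in> S" for y
    unfolding L_def lVb_def S_def[symmetric] using bdd that by (intro cSup_upper) auto
  have xS: "x \<in> S" unfolding S_def using b by (simp add: dist_norm mult_le_cancel_right1)
  have "gV x \<noteq> 0" using gf by auto
  then have Lpos: "L > 0" using gL[OF xS] by (smt (verit) zero_less_norm_iff)
  have Cpos: "C x > 0" and Wpos: "W x > 0" using C_pd W_pd False by (auto simp: pos_def_def)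
  have mvt: "norm (V (x + h *\<^sub>R F h x) - V (z h x)) \<le> L * norm ((x + h *\<^sub>R F h x) - z h x)"
  proof (rule differentiable_bound[where f'="\<lambda>y v. gV y \<bullet> v"])
    show "convex S" unfolding S_def by simp
    show "(V has_derivative (\<lambda>v. gV y \<bullet> v)) (at y within S)" if "y \<in> S" for y
      using Vd has_derivative_at_withinI by blast
    show "onorm (\<lambda>v. gV y \<bullet> v) \<le> L" if "y \<in> S" for y
    proof (rule onorm_le)
      fix v :: 'a
      have "norm (gV y \<bullet> v) \<le> norm (gV y) * norm v" using Cauchy_Schwarz_ineq2 by simp
      also have "\<dots> \<le> L * norm v" using gL[OF that] by (simp add: mult_right_mono)
      finally show "norm (gV y \<bullet> v) \<le> L * norm v" .
    qed
    show "x + h *\<^sub>R F h x \<in> S" "z h x \<in> S" using hyp_ii by (auto simp: S_def mem_cball_0)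
  qed
  define Q where "Q = (1 - lam) * W x / (L * C x)"
  have Qpos: "Q > 0" unfolding Q_def using lam Wpos Lpos Cpos by simp
  have "h \<le> Q powr (1 / real p)" using phi_le[OF False] h unfolding Q_def L_def by simp
  then have "h ^ p \<le> (Q powr (1 / real p)) ^ p" using h by (simp add: power_mono)
  also have "\<dots> = Q"
    using Qpos p by (simp add: powr_realpow[symmetric] powr_powr)
  finally have hp: "h ^ p \<le> Q" .
  have "L * C x * h ^ p \<le> L * C x * Q" using hp Lpos Cpos by simp
  also have "\<dots> = (1 - lam) * W x" unfolding Q_def using Lpos Cpos by simp
  finally have e1: "L * C x * h ^ p \<le> (1 - lam) * W x" .
  have "norm ((x + h *\<^sub>R F h x) - z h x) = norm (z h x - x - h *\<^sub>R F h x)"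
    by (metis diff_diff_eq minus_diff_eq norm_minus_cancel)
  then have "V (x + h *\<^sub>R F h x) \<le> V (z h x) + L * (C x * h ^ (p + 1))"
    using mvt hyp_iii Lpos by (smt (verit) mult_left_mono real_norm_def)
  also have "L * (C x * h ^ (p + 1)) = h * (L * C x * h ^ p)" by (simp add: algebra_simps)
  also have "\<dots> \<le> h * ((1 - lam) * W x)" using e1 h by (simp add: mult_left_mono)
  finally show ?thesis using hyp_i by (simp add: algebra_simps)
qed



locale hyb =
  fixes F :: "real \<Rightarrow> 'a::euclidean_space \<Rightarrow> 'a" and phi V W :: "'a \<Rightarrow> real" and lam eb :: real
  assumes phi_cont: "continuous_on UNIV phi" and phi_pos: "\<And>x. phi x > 0"
    and V_cont: "continuous_on UNIV V" and V_pd: "pos_def V" and V_unb: "filterlim V at_top at_infinity"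
    and W_cont: "continuous_on UNIV W" and W_pd: "pos_def W"
    and lam_pos: "lam > 0" and eb_pos: "eb > 0"
    and step: "\<And>x h. 0 \<le> h \<Longrightarrow> h \<le> phi x \<Longrightarrow> V (x + h *\<^sub>R F h x) \<le> V x - lam * h * W x"
    and interp: "\<And>x h th. 0 \<le> h \<Longrightarrow> h \<le> phi x \<Longrightarrow> 0 \<le> th \<Longrightarrow> th \<le> 1 \<Longrightarrow>
                   norm (x + (th * h) *\<^sub>R F h x) \<le> eb * norm x"
    and F0: "\<And>h. 0 \<le> h \<Longrightarrow> h \<le> phi 0 \<Longrightarrow> F h 0 = 0"
begin

definition tau where "tau u x0 i = fst (hyb_seq F phi u x0 i)"
definition xs where "xs u x0 i = snd (hyb_seq F phi u x0 i)"
definition hh where "hh u x0 i = phi (xs u x0 i) * exp (- u (tau u x0 i))"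

lemma seq0[simp]: "tau u x0 0 = 0" "xs u x0 0 = x0"
  by (simp_all add: tau_def xs_def)

lemma seqS: "tau u x0 (Suc i) = tau u x0 i + hh u x0 i"
  "xs u x0 (Suc i) = xs u x0 i + hh u x0 i *\<^sub>R F (hh u x0 i) (xs u x0 i)"
  by (simp_all add: tau_def xs_def hh_def Let_def case_prod_beta)

lemma traj_eq: "hyb_traj F phi u x0 t =
   (let i = (LEAST i. t < tau u x0 (Suc i)) in xs u x0 i + (t - tau u x0 i) *\<^sub>R F (hh u x0 i) (xs u x0 i))"
  by (simp add: hyb_traj_def tau_def xs_def hh_def Let_def case_prod_beta)

lemma V_nonneg: "V x \<ge> 0" using V_pd unfolding pos_def_def by (metis order.strict_implies_order order_refl)
lemma W_nonneg: "W x \<ge> 0" using W_pd unfolding pos_def_def by (metis order.strict_implies_order order_refl)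

context
  fixes u :: "real \<Rightarrow> real" and x0 :: 'a assumes adm: "admissible_input u"
begin

lemma hh_pos: "hh u x0 i > 0" by (simp add: hh_def phi_pos)

lemma tau_nonneg: "tau u x0 i \<ge> 0"
  by (induction i) (auto simp: seqS intro: add_nonneg_nonneg less_imp_le hh_pos)

lemma hh_le: "hh u x0 i \<le> phi (xs u x0 i)"
proof -
  have "u (tau u x0 i) \<ge> 0" using adm tau_nonneg by (simp add: admissible_input_def)
  then have "exp (- u (tau u x0 i)) \<le> 1" by simp
  then show ?thesis unfolding hh_def using phi_pos
    by (metis mult.right_neutral mult_left_mono less_imp_le)
qed

lemma V_step: "V (xs u x0 (Suc i)) \<le> V (xs u x0 i) - lam * hh u x0 i * W (xs u x0 i)"
  unfolding seqS using step[OF less_imp_le[OF hh_pos] hh_le] .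

lemma V_dec: "V (xs u x0 (Suc i)) \<le> V (xs u x0 i)"
  using V_step[of i] lam_pos hh_pos[of i] W_nonneg[of "xs u x0 i"]
  by (smt (verit) mult_nonneg_nonneg)

lemma V_le0: "V (xs u x0 i) \<le> V x0"
  by (induction i) (auto intro: order.trans[OF V_dec])

lemma V_mono: "j \<le> i \<Longrightarrow> V (xs u x0 i) \<le> V (xs u x0 j)"
  by (induction i rule: dec_induct) (auto intro: order.trans[OF V_dec])

lemma tau_unb: "\<exists>k. T < tau u x0 (Suc k)"
proof (rule ccontr)
  assume "\<not> ?thesis"
  then have tT: "\<And>k. tau u x0 (Suc k) \<le> T" by (simp add: not_less)
  then have tT': "\<And>k. tau u x0 k \<le> T" using tau_nonneg
    by (metis (full_types) le0 order.trans not0_implies_Suc seq0(1) tau_nonneg)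
  have T0: "T \<ge> 0" using tT'[of 0] tau_nonneg[of 0] by simp
  obtain R where R: "\<And>x. V x \<le> V x0 \<Longrightarrow> norm x < R" using sublevel_bdd[OF V_unb] by blast
  have xsR: "xs u x0 k \<in> cball 0 R" for k using R[OF V_le0[of k]] by simp
  have ne: "cball (0::'a) R \<noteq> {}" using xsR by blast
  obtain y where y: "\<forall>x\<in>cball 0 R. phi y \<le> phi x"
    using continuous_attains_inf[OF compact_cball ne continuous_on_subset[OF phi_cont]] by blast
  define pm where "pm = phi y"
  have pm: "pm > 0" "\<And>k. pm \<le> phi (xs u x0 k)" using y xsR phi_pos by (auto simp: pm_def)
  have "bounded (u ` {0..T})" using adm T0 by (simp add: admissible_input_def)
  then obtain U where U: "\<And>t. t \<in> {0..T} \<Longrightarrow> norm (u t) \<le> U"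
    unfolding bounded_iff by (metis atLeastAtMost_iff image_eqI)
  have ule: "u (tau u x0 k) \<le> U" for k using U[of "tau u x0 k"] tT' tau_nonneg by force
  define d where "d = pm * exp (- U)"
  have dpos: "d > 0" using pm by (simp add: d_def)
  have hd: "d \<le> hh u x0 k" for k
    unfolding d_def hh_def using pm ule[of k] phi_pos
    by (intro mult_mono) (auto intro: less_imp_le)
  have "real k * d \<le> tau u x0 k" for k
  proof (induction k)
    case (Suc k) then show ?case using hd[of k] by (simp add: seqS algebra_simps)
  qed simp
  moreover obtain k where "T / d < real k" using reals_Archimedean2 by blast
  ultimately show False using tT'[of k] dpos
    by (smt (verit, best) mult.commute pos_divide_less_eq)
qed

lemma traj_rep:
  assumes t: "t \<ge> 0"
  shows "\<exists>i. tau u x0 i \<le> t \<and> t < tau u x0 (Suc i) \<and>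
     hyb_traj F phi u x0 t = xs u x0 i + (t - tau u x0 i) *\<^sub>R F (hh u x0 i) (xs u x0 i) \<and>
     norm (hyb_traj F phi u x0 t) \<le> eb * norm (xs u x0 i)"
proof -
  define i where "i = (LEAST i. t < tau u x0 (Suc i))"
  obtain k where "t < tau u x0 (Suc k)" using tau_unb by blast
  then have i1: "t < tau u x0 (Suc i)" unfolding i_def by (rule LeastI)
  have i2: "tau u x0 i \<le> t"
  proof (cases i)
    case 0 then show ?thesis using t by simp
  next
    case (Suc j)
    then have "\<not> t < tau u x0 (Suc j)" unfolding i_def
      by (metis i_def lessI not_less_Least)
    then show ?thesis using Suc by simp
  qed
  have eq: "hyb_traj F phi u x0 t = xs u x0 i + (t - tau u x0 i) *\<^sub>R F (hh u x0 i) (xs u x0 i)"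
    by (simp add: traj_eq i_def Let_def)
  define th where "th = (t - tau u x0 i) / hh u x0 i"
  have hp: "hh u x0 i > 0" by (rule hh_pos)
  have th: "0 \<le> th" "th \<le> 1" "th * hh u x0 i = t - tau u x0 i"
    using i1 i2 hp by (auto simp: th_def seqS field_simps)
  have "norm (hyb_traj F phi u x0 t) \<le> eb * norm (xs u x0 i)"
    unfolding eq th(3)[symmetric] using interp[OF less_imp_le[OF hp] hh_le th(1,2)] .
  then show ?thesis using i1 i2 eq by blast
qed

end

theorem urgas: "URGAS F phi"
  unfolding URGAS_def
proof (intro conjI allI impI)
  fix e :: real assume e: "e > 0"
  obtain c where c: "c > 0" "\<And>x. V x < c \<Longrightarrow> norm x < e / eb"
    using small_V[OF V_cont V_pd V_unb, of "e / eb"] e eb_pos by auto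
  obtain d where d: "d > 0" "\<And>x. norm x < d \<Longrightarrow> V x < c"
    using V_small0[OF V_cont V_pd c(1)] by blast
  show "\<exists>d>0. \<forall>(x0::'a) u t. norm x0 < d \<and> admissible_input u \<and> 0 \<le> t \<longrightarrow> norm (hyb_traj F phi u x0 t) < e"
  proof (intro exI[of _ d] conjI allI impI)
    fix x0 :: 'a and u :: "real \<Rightarrow> real" and t :: real assume H: "norm x0 < d \<and> admissible_input u \<and> 0 \<le> t"
    then obtain i where i: "norm (hyb_traj F phi u x0 t) \<le> eb * norm (xs u x0 i)"
      using traj_rep by blast
    have "V (xs u x0 i) < c" using V_le0[of u x0 i] d(2)[of x0] H by simp
    then have "norm (xs u x0 i) < e / eb" by (rule c(2))
    then have "eb * norm (xs u x0 i) < e" using eb_pos by (simp add: field_simps)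
    then show "norm (hyb_traj F phi u x0 t) < e" using i by simp
  qed (rule d(1))
next
  fix R :: real
  obtain Vm where Vm: "\<And>x. norm x \<le> R \<Longrightarrow> V x \<le> Vm" using ball_max[OF V_cont] by blast
  obtain R2 where R2: "\<And>x. V x \<le> Vm \<Longrightarrow> norm x < R2" using sublevel_bdd[OF V_unb] by blast
  show "\<exists>B. \<forall>(x0::'a) u t. norm x0 \<le> R \<and> admissible_input u \<and> 0 \<le> t \<longrightarrow> norm (hyb_traj F phi u x0 t) \<le> B"
  proof (intro exI[of _ "eb * R2"] allI impI)
    fix x0 :: 'a and u :: "real \<Rightarrow> real" and t :: real assume H: "norm x0 \<le> R \<and> admissible_input u \<and> 0 \<le> t"
    then obtain i where i: "norm (hyb_traj F phi u x0 t) \<le> eb * norm (xs u x0 i)"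
      using traj_rep by blast
    have "norm (xs u x0 i) < R2" using R2 V_le0[of u x0 i] Vm[of x0] H by force
    then show "norm (hyb_traj F phi u x0 t) \<le> eb * R2" using i eb_pos
      by (smt (verit) mult_left_mono)
  qed
next
  fix e R :: real assume e: "e > 0"
  obtain c where c: "c > 0" "\<And>x. V x < c \<Longrightarrow> norm x < e / eb"
    using small_V[OF V_cont V_pd V_unb, of "e / eb"] e eb_pos by auto
  obtain r0 where r0: "r0 > 0" "\<And>x. norm x < r0 \<Longrightarrow> V x < c"
    using V_small0[OF V_cont V_pd c(1)] by blast
  obtain Vm where Vm: "\<And>x. norm x \<le> R \<Longrightarrow> V x \<le> Vm" using ball_max[OF V_cont] by blast
  obtain R2 where R2: "\<And>x. V x \<le> Vm \<Longrightarrow> norm x < R2" using sublevel_bdd[OF V_unb] by blast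
  obtain w where w: "w > 0" "\<And>x. r0 \<le> norm x \<Longrightarrow> norm x \<le> R2 \<Longrightarrow> w \<le> W x"
    using pd_min[OF W_cont W_pd r0(1), of R2] by blast
  define T where "T = Vm / (lam * w)"
  show "\<exists>T. \<forall>(x0::'a) u t. norm x0 \<le> R \<and> admissible_input u \<and> T \<le> t \<and> 0 \<le> t \<longrightarrow>
           norm (hyb_traj F phi u x0 t) \<le> e"
  proof (intro exI[of _ T] allI impI)
    fix x0 :: 'a and u :: "real \<Rightarrow> real" and t :: real assume H: "norm x0 \<le> R \<and> admissible_input u \<and> T \<le> t \<and> 0 \<le> t"
    then have adm: "admissible_input u" and x0R: "norm x0 \<le> R" by auto
    have xsR2: "norm (xs u x0 k) < R2" for k using R2 V_le0[OF adm, of x0 k] Vm[OF x0R] by force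
    have claim: "(\<forall>j<k. c \<le> V (xs u x0 j)) \<longrightarrow> V (xs u x0 k) \<le> V x0 - lam * w * tau u x0 k" for k
    proof (induction k)
      case (Suc k)
      show ?case
      proof
        assume A: "\<forall>j<Suc k. c \<le> V (xs u x0 j)"
        then have IH: "V (xs u x0 k) \<le> V x0 - lam * w * tau u x0 k" using Suc by auto
        have "c \<le> V (xs u x0 k)" using A by auto
        then have "r0 \<le> norm (xs u x0 k)" using r0(2)[of "xs u x0 k"] by linarith
        then have Wk: "w \<le> W (xs u x0 k)" using w(2) xsR2[of k] by simp
        have "lam * hh u x0 k * w \<le> lam * hh u x0 k * W (xs u x0 k)"
          using Wk lam_pos hh_pos[OF adm, of x0 k] by simp
        then show "V (xs u x0 (Suc k)) \<le> V x0 - lam * w * tau u x0 (Suc k)"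
          using V_step[OF adm, of x0 k] IH by (simp add: seqS algebra_simps)
      qed
    qed simp
    obtain i where i: "tau u x0 i \<le> t" "t < tau u x0 (Suc i)"
      "norm (hyb_traj F phi u x0 t) \<le> eb * norm (xs u x0 i)"
      using traj_rep[OF adm] H by blast
    have "\<exists>j<Suc i. V (xs u x0 j) < c"
    proof (rule ccontr)
      assume "\<not> ?thesis"
      then have "V (xs u x0 (Suc i)) \<le> V x0 - lam * w * tau u x0 (Suc i)"
        using claim[of "Suc i"] by (meson not_less)
      then have "lam * w * tau u x0 (Suc i) \<le> Vm" using V_nonneg[of "xs u x0 (Suc i)"] Vm[OF x0R] by simp
      then have "tau u x0 (Suc i) \<le> T" unfolding T_def using lam_pos w(1)
        by (simp add: field_simps mult.commute)
      then show False using i H by simp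
    qed
    then obtain j where "j \<le> i" "V (xs u x0 j) < c" using less_Suc_eq_le by blast
    then have "V (xs u x0 i) < c" using V_mono[OF adm, of j i x0] by simp
    then have "norm (xs u x0 i) < e / eb" by (rule c(2))
    then have "eb * norm (xs u x0 i) < e" using eb_pos by (simp add: field_simps)
    then show "norm (hyb_traj F phi u x0 t) \<le> e" using i by simp
  qed
qed


theorem expst:
  assumes sig: "\<sigma> > 0" "K > 0" "\<And>x. W x \<ge> 2 * \<sigma> * V x" "\<And>x. V x \<ge> K * (norm x)\<^sup>2"
  shows "robust_K_exp_stable F phi"
proof -
  define m where "m = (\<lambda>r. Sup (V ` cball (0::'a) r))"
  have ms: "continuous_on {0..} m" "\<And>r r'. 0 \<le> r \<Longrightarrow> r \<le> r' \<Longrightarrow> m r \<le> m r'"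
    "\<And>x. V x \<le> m (norm x)"
    using sup_ball[OF V_cont] unfolding m_def by auto
  have m0: "m 0 = 0" using V_pd by (simp add: m_def pos_def_def)
  have mnn: "m r \<ge> 0" if "r \<ge> 0" for r using ms(2)[of 0 r] that m0 by simp
  define cc where "cc = eb * exp (1/2) / sqrt K"
  have cc: "cc > 0" using eb_pos sig by (simp add: cc_def)
  define a where "a = (\<lambda>r. r + cc * sqrt (m r))"
  have aK: "class_K_inf a"
    unfolding class_K_inf_def
  proof (intro conjI)
    show "continuous_on {0..} a" unfolding a_def
      by (intro continuous_intros continuous_on_compose2[OF continuous_on_real_sqrt ms(1)]) auto
    show "strict_mono_on {0..} a"
    proof (rule strict_mono_onI)
      fix r r' :: real assume "r \<in> {0..}" "r' \<in> {0..}" "r < r'"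
      then have "sqrt (m r) \<le> sqrt (m r')" using ms(2)[of r r'] by simp
      then show "a r < a r'" unfolding a_def using \<open>r < r'\<close> cc
        by (smt (verit) mult_left_mono)
    qed
    show "a 0 = 0" by (simp add: a_def m0)
    show "filterlim a at_top at_top"
    proof (rule filterlim_at_top_mono[OF filterlim_ident])
      show "eventually (\<lambda>x. x \<le> a x) at_top"
        using eventually_ge_at_top[of "0::real"]
        by eventually_elim (simp add: a_def mnn cc less_imp_le)
    qed
  qed
  define s where "s = lam * \<sigma>"
  have s: "s > 0" using lam_pos sig by (simp add: s_def)
  have bound: "norm (hyb_traj F phi u x0 t) \<le> exp (- s * t) * a (norm x0)"
    if adm: "admissible_input u" and t: "t \<ge> 0" for u x0 t
  proof -
    have Vs: "V (xs u x0 (Suc i)) \<le> V (xs u x0 i) * (1 - 2 * s * hh u x0 i)" for i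
    proof -
      have "lam * hh u x0 i * (2 * \<sigma> * V (xs u x0 i)) \<le> lam * hh u x0 i * W (xs u x0 i)"
        using sig(3) lam_pos hh_pos[OF adm, of x0 i] by (intro mult_left_mono) auto
      then show ?thesis using V_step[OF adm, of x0 i] by (simp add: s_def algebra_simps)
    qed
    have Vexp: "V (xs u x0 i) \<le> exp (- 2 * s * tau u x0 i) * V x0" for i
    proof (induction i)
      case (Suc i)
      have "1 - 2 * s * hh u x0 i \<le> exp (- 2 * s * hh u x0 i)"
        using exp_ge_add_one_self[of "- 2 * s * hh u x0 i"] by simp
      then have "V (xs u x0 (Suc i)) \<le> V (xs u x0 i) * exp (- 2 * s * hh u x0 i)"
        using Vs[of i] V_nonneg[of "xs u x0 i"] by (smt (verit) mult_left_mono)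
      also have "\<dots> \<le> exp (- 2 * s * tau u x0 i) * V x0 * exp (- 2 * s * hh u x0 i)"
        using Suc by (simp add: mult_right_mono)
      also have "\<dots> = exp (- 2 * s * tau u x0 (Suc i)) * V x0"
        by (simp add: seqS algebra_simps mult_exp_exp)
      finally show ?case .
    qed simp
    obtain i where i: "tau u x0 i \<le> t" "t < tau u x0 (Suc i)"
      "hyb_traj F phi u x0 t = xs u x0 i + (t - tau u x0 i) *\<^sub>R F (hh u x0 i) (xs u x0 i)"
      "norm (hyb_traj F phi u x0 t) \<le> eb * norm (xs u x0 i)"
      using traj_rep[OF adm t] by blast
    have anr: "a (norm x0) \<ge> 0" unfolding a_def using mnn cc by simp
    show ?thesis
    proof (cases "xs u x0 i = 0")
      case True
      have "F (hh u x0 i) 0 = 0" using F0 hh_le[OF adm, of x0 i] hh_pos[OF adm, of x0 i] True by simp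
      then have "hyb_traj F phi u x0 t = 0" using i(3) True by simp
      then show ?thesis using anr by simp
    next
      case False
      have Vpos: "V (xs u x0 i) > 0" using False V_pd by (simp add: pos_def_def)
      have "0 \<le> V (xs u x0 i) * (1 - 2 * s * hh u x0 i)" using Vs[of i] V_nonneg[of "xs u x0 (Suc i)"] by linarith
      then have "0 \<le> 1 - 2 * s * hh u x0 i" using Vpos by (simp add: zero_le_mult_iff)
      then have hb: "s * hh u x0 i \<le> 1/2" by simp
      have "t < tau u x0 i + hh u x0 i" using i(2) by (simp add: seqS)
      then have "s * t \<le> s * (tau u x0 i + hh u x0 i)" using s by (intro mult_left_mono) auto
      then have "s * t \<le> s * tau u x0 i + 1/2" using hb by (simp add: distrib_left)
      then have E: "exp (- s * tau u x0 i) \<le> exp (1/2) * exp (- s * t)"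
        by (simp add: mult_exp_exp)
      have "K * (norm (xs u x0 i))\<^sup>2 \<le> exp (- 2 * s * tau u x0 i) * V x0"
        using sig(4) Vexp by (rule order.trans)
      also have "\<dots> \<le> exp (- 2 * s * tau u x0 i) * m (norm x0)"
        using ms(3)[of x0] by simp
      also have "exp (- 2 * s * tau u x0 i) = (exp (- s * tau u x0 i))\<^sup>2"
        by (simp add: power2_eq_square mult_exp_exp)
      finally have "K * (norm (xs u x0 i))\<^sup>2 \<le> (exp (- s * tau u x0 i))\<^sup>2 * m (norm x0)" .
      then have "(norm (xs u x0 i))\<^sup>2 \<le> (exp (- s * tau u x0 i))\<^sup>2 * (m (norm x0) / K)"
        using sig(2) by (simp add: pos_le_divide_eq mult.commute mult.left_commute)
      then have "norm (xs u x0 i) \<le> sqrt ((exp (- s * tau u x0 i))\<^sup>2 * (m (norm x0) / K))"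
        using real_le_rsqrt by blast
      also have "\<dots> = exp (- s * tau u x0 i) * (sqrt (m (norm x0)) / sqrt K)"
        by (simp add: real_sqrt_mult real_sqrt_divide)
      also have "\<dots> \<le> exp (1/2) * exp (- s * t) * (sqrt (m (norm x0)) / sqrt K)"
        using E mnn[of "norm x0"] sig(2) by (intro mult_right_mono) auto
      finally have "eb * norm (xs u x0 i) \<le> eb * (exp (1/2) * exp (- s * t) * (sqrt (m (norm x0)) / sqrt K))"
        using eb_pos by (rule mult_left_mono[OF _ less_imp_le])
      also have "\<dots> = exp (- s * t) * (cc * sqrt (m (norm x0)))" by (simp add: cc_def)
      also have "\<dots> \<le> exp (- s * t) * a (norm x0)" by (simp add: a_def)
      finally show ?thesis using i(4) by simp
    qed
  qed
  show ?thesis unfolding robust_K_exp_stable_def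
    using aK s bound by blast
qed

end


theorem theorem4p9:
  fixes f :: "'a::euclidean_space \<Rightarrow> 'a"
    and z :: "real \<Rightarrow> 'a \<Rightarrow> 'a"
    and s :: nat and a :: "nat \<Rightarrow> nat \<Rightarrow> real" and bw :: "nat \<Rightarrow> real"
    and phi :: "'a \<Rightarrow> real" and M :: "real \<Rightarrow> real"
    and p :: nat
    and V :: "'a \<Rightarrow> real" and gV :: "'a \<Rightarrow> 'a" and W :: "'a \<Rightarrow> real"
    and b :: real and C :: "'a \<Rightarrow> real" and lam :: real
  assumes f_lip: "loc_lipschitz f" and f0: "f 0 = 0"
    and flow: "is_flow f z"
    and consistent: "(\<Sum>i<s. bw i) = 1"
    and phi_cont: "continuous_on UNIV phi" and phi_pos: "\<forall>x. phi x > 0"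
    and stages_ex: "\<forall>x h. 0 \<le> h \<and> h \<le> phi x \<longrightarrow> (\<exists>Y. rk_stages s a f h x Y)"
    and stages_uniq: "\<forall>x h Y Y'. 0 \<le> h \<and> h \<le> phi x \<and> rk_stages s a f h x Y \<and> rk_stages s a f h x Y'
                        \<longrightarrow> (\<forall>i<s. Y i = Y' i)"
    and M_cont: "continuous_on {0..} M" and M_mono: "mono_on {0..} M"
    and F_bound: "\<forall>x h. 0 \<le> h \<and> h \<le> phi x \<longrightarrow> norm (rk_F s a bw f h x) \<le> norm x * M (norm x)"
    and p_ge: "p \<ge> 1"
    and lyap: "is_lyapunov f V gV"
    and W_cont: "continuous_on UNIV W" and W_pd: "pos_def W"
    and hyp_i: "\<forall>x h. 0 \<le> h \<and> h \<le> phi x \<longrightarrow> V (z h x) \<le> V x - h * W x"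
    and b_nonneg: "b \<ge> 0"
    and hyp_ii: "\<forall>x h. 0 \<le> h \<and> h \<le> phi x \<longrightarrow>
                   norm (z h x) \<le> exp b * norm x \<and>
                   norm (x + h *\<^sub>R rk_F s a bw f h x) \<le> exp b * norm x"
    and C_cont: "continuous_on UNIV C" and C_pd: "pos_def C"
    and hyp_iii: "\<forall>x h. 0 \<le> h \<and> h \<le> phi x \<longrightarrow>
                   norm (z h x - x - h *\<^sub>R rk_F s a bw f h x) \<le> C x * h ^ (p + 1)"
    and lam: "0 < lam" "lam < 1"
    and phi_le: "\<forall>x. x \<noteq> 0 \<longrightarrow>
                   phi x \<le> ((1 - lam) * W x / (lVb gV b x * C x)) powr (1 / real p)"
  shows "URGAS (rk_F s a bw f) phi \<and>
         ((\<exists>\<sigma> K. \<sigma> > 0 \<and> K > 0 \<and> (\<forall>x. W x \<ge> 2 * \<sigma> * V x \<and> V x \<ge> K * (norm x)\<^sup>2))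
            \<longrightarrow> robust_K_exp_stable (rk_F s a bw f) phi)"
  proof -
  have Vd: "\<And>x. (V has_derivative (\<lambda>v. gV x \<bullet> v)) (at x)" and Vpd: "pos_def V"
    and Vu: "filterlim V at_top at_infinity"
    using lyap by (auto simp: is_lyapunov_def)
  have Vc: "continuous_on UNIV V"
    using Vd by (intro continuous_at_imp_continuous_on ballI has_derivative_continuous) blast
  have Fz: "norm (rk_F s a bw f h 0) \<le> 0" if "0 \<le> h" "h \<le> phi 0" for h
    using F_bound that by fastforce
  interpret H: hyb "rk_F s a bw f" phi V W lam "exp b"
  proof
    show "continuous_on UNIV phi" "\<And>x. phi x > 0" by (fact phi_cont) (use phi_pos in blast)
    show "continuous_on UNIV V" "pos_def V" "filterlim V at_top at_infinity" by fact+
    show "continuous_on UNIV W" "pos_def W" by fact+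
    show "lam > 0" "exp b > 0" using lam by auto
    show "rk_F s a bw f h 0 = 0" if "0 \<le> h" "h \<le> phi 0" for h
      using Fz[OF that] by simp
    show "V (x + h *\<^sub>R rk_F s a bw f h x) \<le> V x - lam * h * W x" if h: "0 \<le> h" "h \<le> phi x" for x h
    proof (rule key_step[OF lyap W_pd C_pd, where z=z and p=p and b=b and ph="phi x"])
      show "x = 0 \<Longrightarrow> norm (rk_F s a bw f h 0) \<le> 0" using Fz h by blast
    qed (use hyp_i hyp_ii hyp_iii lam p_ge b_nonneg phi_le h in auto)
    show "norm (x + (th * h) *\<^sub>R rk_F s a bw f h x) \<le> exp b * norm x"
      if h: "0 \<le> h" "h \<le> phi x" and th: "0 \<le> th" "th \<le> 1" for x h th
    proof -
      have eq: "x + (th * h) *\<^sub>R rk_F s a bw f h x = (1 - th) *\<^sub>R x + th *\<^sub>R (x + h *\<^sub>R rk_F s a bw f h x)"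
        by (simp add: algebra_simps)
      have "norm (x + (th * h) *\<^sub>R rk_F s a bw f h x) \<le> (1 - th) * norm x + th * (exp b * norm x)"
        unfolding eq using th hyp_ii h
        by (smt (verit) norm_scaleR norm_triangle_ineq abs_of_nonneg mult_left_mono)
      also have "\<dots> \<le> (1 - th) * (exp b * norm x) + th * (exp b * norm x)"
        using th b_nonneg by (intro add_mono mult_left_mono) (auto simp: mult_le_cancel_right1)
      finally show ?thesis by (simp add: algebra_simps)
    qed
  qed
  show ?thesis
  proof (intro conjI impI)
    show "URGAS (rk_F s a bw f) phi" by (rule H.urgas)
  next
    assume "\<exists>\<sigma> K. \<sigma> > 0 \<and> K > 0 \<and> (\<forall>x. W x \<ge> 2 * \<sigma> * V x \<and> V x \<ge> K * (norm x)\<^sup>2)"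
    then obtain \<sigma> K where "\<sigma> > 0" "K > 0" "\<And>x. W x \<ge> 2 * \<sigma> * V x" "\<And>x. V x \<ge> K * (norm x)\<^sup>2"
      by blast
    then show "robust_K_exp_stable (rk_F s a bw f) phi" by (rule H.expst)
  qed
qed

end
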